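(* Let $P\in O(V,K)$, $p,x\in V$ and $X\in\mathfrak{o}(V,K)$, and let $P^\vee$ be the $(n+3)\times(n+3)$ matrix $\begin{pmatrix}1&p^*\\0&P\end{pmatrix}$. Then for every $Y\in\mathfrak{o}(V,K)$ and every $y\in V$, $$\big\langle \big(PXP^{-1}+L_{Pp,Px},\,(Px)^*\big)\,\big|\,(Y,y^* )\big\rangle=\big\langle (X,x^* )\,\big|\,(P^\vee)^{-1}(Y,y^* )P^\vee\big\rangle .$$ In other words, if $\widetilde{\mathrm{Ad}}_{P^\vee}$ denotes the linear map of $\mathfrak g^\vee$ defined by $(\widetilde{\mathrm{Ad}}_{P^\vee}a)^\sharp=\mathrm{Ad}^T_{(P^\vee)^{-1}}(a^\sharp)$ for all $a\in\mathfrak g^\vee$ (where $\mathrm{Ad}^T_{g}(\mu)=\mu\circ\mathrm{Ad}_g$ and $\mathrm{Ad}_g b=gbg^{-1}$), then $\widetilde{\mathrm{Ad}}_{(P,p^* )}(X,x^* )=\big(PXP^{-1}+L_{Pp,Px},(Px)^*\big)$.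
   Context: Let $n\ge 0$ be an integer and let $\widetilde K$ be a real symmetric $n\times n$ matrix with $\widetilde K^2=I_n$. Let $V=\mathbb R^{n+2}$ with standard basis $e_1,\dots,e_{n+2}$, and let $K=\begin{pmatrix}0&0&1\\0&\widetilde K&0\\1&0&0\end{pmatrix}$ (block sizes $1,n,1$). For $x,w\in V$ write $x^*=x^TK$ (a row vector) and $L_{u,w}=u\,w^*-w\,u^*$ (an $(n+2)\times(n+2)$ matrix). Let $O(V,K)=\{P: P^TKP=K\}$ and $\mathfrak{o}(V,K)=\{X: X^TK+KX=0\}$. Let $\mathfrak g^\vee$ be the Lie algebra of $(n+3)\times(n+3)$ matrices $\begin{pmatrix}0&x^*\\0&X\end{pmatrix}$ with $X\in\mathfrak o(V,K)$, $x\in V$ (the first row/column indexed by an extra basis vector $e_0$); such a matrix is denoted $(X,x^* )$. On $\mathfrak g^\vee$ define the nondegenerate bilinear form $\langle (X,x^* )\,|\,(\overline X,\overline x^{\,*})\rangle=\tfrac12\mathrm{tr}(X\overline X)+\overline x^{\,T}Kx$, and for $a\in\mathfrak g^\vee$ let $a^\sharp$ be the linear functional $b\mapsto\langle a|b\rangle$. Products such as $(P^\vee)^{-1}(Y,y^* )P^\vee$ are matrix products; the result lies again in $\mathfrak g^\vee$. *)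

theory Defs
  imports "Jordan_Normal_Form.Matrix"
begin

(* Indices are 0-based: V-index i (0..n+1) corresponds to e_{i+1};
   in the (n+3)x(n+3) matrices index 0 is e_0 and index i+1 is e_{i+1}. *)

definition mtrace :: "real mat \<Rightarrow> real" where
  "mtrace A = (\<Sum>i<dim_row A. A $$ (i, i))"

definition minv :: "real mat \<Rightarrow> real mat" where
  "minv A = (SOME B. B \<in> carrier_mat (dim_row A) (dim_row A) \<and>
                     A * B = 1\<^sub>m (dim_row A) \<and> B * A = 1\<^sub>m (dim_row A))"

(* K = [[0,0,1],[0,Kt,0],[1,0,0]], block sizes 1,n,1 *)
definition Kmat :: "nat \<Rightarrow> real mat \<Rightarrow> real mat" where
  "Kmat n Kt = mat (n+2) (n+2) (\<lambda>(i,j).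
     if i = 0 \<and> j = n+1 then 1
     else if i = n+1 \<and> j = 0 then 1
     else if 1 \<le> i \<and> i \<le> n \<and> 1 \<le> j \<and> j \<le> n then Kt $$ (i-1, j-1)
     else 0)"

(* x^star = x^T K, represented as the vector of its entries *)
definition star :: "real mat \<Rightarrow> real vec \<Rightarrow> real vec" where
  "star K x = transpose_mat K *\<^sub>v x"

definition Lmat :: "real mat \<Rightarrow> real vec \<Rightarrow> real vec \<Rightarrow> real mat" where
  "Lmat K u w = mat (dim_vec u) (dim_vec u) (\<lambda>(i,j). u $ i * star K w $ j - w $ i * star K u $ j)"

definition orth_group :: "real mat \<Rightarrow> real mat set" where
  "orth_group K = {P \<in> carrier_mat (dim_row K) (dim_row K). transpose_mat P * K * P = K}"

definition orth_alg :: "real mat \<Rightarrow> real mat set" where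
  "orth_alg K = {X \<in> carrier_mat (dim_row K) (dim_row K). transpose_mat X * K + K * X = 0\<^sub>m (dim_row K) (dim_row K)}"

(* the element (X, x^star ) of g^vee: the matrix [[0, x^star],[0, X]] *)
definition gv :: "real mat \<Rightarrow> real mat \<Rightarrow> real vec \<Rightarrow> real mat" where
  "gv K X x = four_block_mat (0\<^sub>m 1 1) (mat_of_row (star K x)) (0\<^sub>m (dim_row X) 1) X"

definition Pvee :: "real mat \<Rightarrow> real mat \<Rightarrow> real vec \<Rightarrow> real mat" where
  "Pvee K P p = four_block_mat (1\<^sub>m 1) (mat_of_row (star K p)) (0\<^sub>m (dim_row P) 1) P"

definition pairing :: "real mat \<Rightarrow> real mat \<Rightarrow> real vec \<Rightarrow> real mat \<Rightarrow> real vec \<Rightarrow> real" where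
  "pairing K X x Xb xb = mtrace (X * Xb) / 2 + xb \<bullet> (K *\<^sub>v x)"

end

theory Submission
  imports Defs "Jordan_Normal_Form.Determinant"
begin

lemma minv_eq:
  fixes A B :: "real mat"
  assumes B: "B \<in> carrier_mat (dim_row A) (dim_row A)" and AB: "A * B = 1\<^sub>m (dim_row A)" and BA: "B * A = 1\<^sub>m (dim_row A)"
  shows "minv A = B"
proof -
  have C: "minv A \<in> carrier_mat (dim_row A) (dim_row A) \<and> A * minv A = 1\<^sub>m (dim_row A) \<and> minv A * A = 1\<^sub>m (dim_row A)"
    unfolding minv_def by (rule someI[of _ B]) (use B AB BA in blast)
  have Ac: "A \<in> carrier_mat (dim_row A) (dim_row A)"
  proof -
    have "dim_col (B * A) = dim_row A" unfolding BA by simp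
    hence "dim_col A = dim_row A" by simp
    thus ?thesis by (intro carrier_matI) auto
  qed
  have C1: "minv A \<in> carrier_mat (dim_row A) (dim_row A)" and C3: "minv A * A = 1\<^sub>m (dim_row A)"
    using C by blast+
  have "minv A = minv A * (A * B)" unfolding AB by (rule right_mult_one_mat[OF C1, symmetric])
  also have "\<dots> = (minv A * A) * B" by (rule assoc_mult_mat[OF C1 Ac B, symmetric])
  also have "\<dots> = B" unfolding C3 by (rule left_mult_one_mat[OF B])
  finally show ?thesis .
qed
lemma K_carrier: "Kmat n Kt \<in> carrier_mat (n+2) (n+2)"
  by (simp add: Kmat_def)
lemma K_sym:
  assumes "Kt \<in> carrier_mat n n" "transpose_mat Kt = Kt"
  shows "transpose_mat (Kmat n Kt) = Kmat n Kt"
proof (rule eq_matI)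
  fix i j assume "i < dim_row (Kmat n Kt)" "j < dim_col (Kmat n Kt)"
  moreover have "\<And>a b. a < n \<Longrightarrow> b < n \<Longrightarrow> Kt $$ (a,b) = Kt $$ (b,a)"
    using assms by (metis carrier_matD index_transpose_mat(1))
  ultimately show "transpose_mat (Kmat n Kt) $$ (i, j) = Kmat n Kt $$ (i, j)"
    by (auto simp: Kmat_def)
qed (auto simp: Kmat_def)
lemma sum_split_K:
  fixes f :: "nat \<Rightarrow> real"
  shows "(\<Sum>k<n+2. f k) = f 0 + (\<Sum>k<n. f (k+1)) + f (n+1)"
proof -
  have "(\<Sum>k<n+2. f k) = (\<Sum>k<Suc (Suc n). f k)" by simp
  also have "\<dots> = f 0 + (\<Sum>k<Suc n. f (Suc k)) " by (simp only: sum.lessThan_Suc_shift)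
  also have "\<dots> = f 0 + (\<Sum>k<n. f (k+1)) + f (n+1)" by simp
  finally show ?thesis .
qed

lemma K_sq:
  assumes Kt: "Kt \<in> carrier_mat n n" "Kt * Kt = 1\<^sub>m n"
  shows "Kmat n Kt * Kmat n Kt = 1\<^sub>m (n+2)"
proof (rule eq_matI)
  let ?K = "Kmat n Kt"
  fix i j assume ij: "i < dim_row (1\<^sub>m (n+2))" "j < dim_col (1\<^sub>m (n+2))"
  hence ij': "i < n+2" "j < n+2" by auto
  have e: "(?K * ?K) $$ (i,j) = (\<Sum>k<n+2. ?K $$ (i,k) * ?K $$ (k,j))"
    using ij' by (simp add: Kmat_def scalar_prod_def atLeast0LessThan)
  have KKt: "\<And>a b. a < n \<Longrightarrow> b < n \<Longrightarrow> (\<Sum>k<n. Kt $$ (a,k) * Kt $$ (k,b)) = (if a = b then 1 else 0)"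
  proof -
    fix a b assume "a < n" "b < n"
    hence h1: "(Kt * Kt) $$ (a,b) = (\<Sum>k<n. Kt $$ (a,k) * Kt $$ (k,b))"
      using Kt(1) by (simp add: scalar_prod_def atLeast0LessThan)
    have h2: "(Kt * Kt) $$ (a,b) = (if a = b then 1 else 0)"
      unfolding Kt(2) using \<open>a<n\<close> \<open>b<n\<close> by simp
    show "(\<Sum>k<n. Kt $$ (a,k) * Kt $$ (k,b)) = (if a = b then 1 else 0)"
      using h1 h2 by simp
  qed
  show "(?K * ?K) $$ (i,j) = 1\<^sub>m (n+2) $$ (i,j)"
  proof (cases "i = 0 \<or> i = n+1")
    case True
    then show ?thesis unfolding e sum_split_K using ij' by (auto simp: Kmat_def)
  next
    case False
    hence i: "1 \<le> i" "i \<le> n" using ij' by auto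
    show ?thesis
    proof (cases "j = 0 \<or> j = n+1")
      case True
      then show ?thesis unfolding e sum_split_K using ij' i by (auto simp: Kmat_def)
    next
      case False
      hence j: "1 \<le> j" "j \<le> n" using ij' by auto
      have "(\<Sum>k<n. ?K $$ (i,k+1) * ?K $$ (k+1,j)) = (\<Sum>k<n. Kt $$ (i-1,k) * Kt $$ (k,j-1))"
        using i j by (intro sum.cong) (auto simp: Kmat_def)
      also have "\<dots> = (if i = j then 1 else 0)" using KKt[of "i-1" "j-1"] i j by auto
      finally show ?thesis unfolding e sum_split_K using ij' i j by (auto simp: Kmat_def)
    qed
  qed
qed (auto simp: Kmat_def)
lemma mat_of_row_tmult:
  fixes M :: "real mat"
  assumes "M \<in> carrier_mat k m" "a \<in> carrier_vec k"
  shows "mat_of_row (transpose_mat M *\<^sub>v a) = mat_of_row a * M"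
  apply (rule eq_matI)
  using assms by (auto simp: comm_scalar_prod[of _ k])
lemma mat_of_row_minus:
  fixes a b :: "real vec"
  assumes "a \<in> carrier_vec k" "b \<in> carrier_vec k"
  shows "mat_of_row (a - b) = mat_of_row a - mat_of_row b"
  apply (rule eq_matI) using assms by auto
lemma mtrace_comm:
  fixes A B :: "real mat"
  assumes "A \<in> carrier_mat m k" "B \<in> carrier_mat k m"
  shows "mtrace (A * B) = mtrace (B * A)"
proof -
  have "mtrace (A*B) = (\<Sum>i<m. \<Sum>j<k. A$$(i,j) * B$$(j,i))"
    using assms by (simp add: mtrace_def scalar_prod_def atLeast0LessThan)
  also have "\<dots> = (\<Sum>j<k. \<Sum>i<m. B$$(j,i) * A$$(i,j))"
    by (subst sum.swap) (simp add: mult.commute)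
  also have "\<dots> = mtrace (B*A)"
    using assms by (simp add: mtrace_def scalar_prod_def atLeast0LessThan)
  finally show ?thesis .
qed
lemma mtrace_add:
  fixes A B :: "real mat"
  assumes "A \<in> carrier_mat m m" "B \<in> carrier_mat m m"
  shows "mtrace (A + B) = mtrace A + mtrace B"
  using assms by (simp add: mtrace_def sum.distrib)
lemma mtrace_L:
  fixes K Y :: "real mat" and u v :: "real vec"
  assumes K: "K \<in> carrier_mat m m" and Y: "Y \<in> carrier_mat m m"
    and u: "u \<in> carrier_vec m" and v: "v \<in> carrier_vec m"
  shows "mtrace (Lmat K u v * Y) = star K v \<bullet> (Y *\<^sub>v u) - star K u \<bullet> (Y *\<^sub>v v)"
proof -
  have dims: "dim_vec (star K v) = m" "dim_vec (star K u) = m"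
    using K by (auto simp: star_def)
  have "mtrace (Lmat K u v * Y) = (\<Sum>i<m. \<Sum>j<m. (u$i * star K v $ j - v$i * star K u $ j) * Y$$(j,i))"
    using assms by (simp add: mtrace_def Lmat_def scalar_prod_def atLeast0LessThan)
  also have "\<dots> = (\<Sum>i<m. \<Sum>j<m. star K v $ j * (Y$$(j,i) * u$i)) - (\<Sum>i<m. \<Sum>j<m. star K u $ j * (Y$$(j,i) * v$i))"
    by (simp add: sum_subtractf[symmetric] algebra_simps)
  also have "\<dots> = (\<Sum>j<m. \<Sum>i<m. star K v $ j * (Y$$(j,i) * u$i)) - (\<Sum>j<m. \<Sum>i<m. star K u $ j * (Y$$(j,i) * v$i))"
    by (subst (1 2) sum.swap) (rule refl)
  also have "\<dots> = star K v \<bullet> (Y *\<^sub>v u) - star K u \<bullet> (Y *\<^sub>v v)"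
    using assms dims by (simp add: scalar_prod_def mult_mat_vec_def atLeast0LessThan sum_distrib_left)
  finally show ?thesis .
qed

lemma uminus_zero_mat_real[simp]: "- (0\<^sub>m a b :: real mat) = 0\<^sub>m a b"
  by (rule eq_matI) auto

lemma neg_from_sum:
  fixes A B :: "real mat"
  assumes A: "A \<in> carrier_mat m m" and B: "B \<in> carrier_mat m m" and S: "A + B = 0\<^sub>m m m"
  shows "A = - B"
proof (rule eq_matI)
  fix i j assume "i < dim_row (- B)" "j < dim_col (- B)"
  hence ij: "i < m" "j < m" using B by auto
  have "(A + B) $$ (i,j) = 0" unfolding S using ij by simp
  hence "A $$ (i,j) + B $$ (i,j) = 0" using ij A B by simp
  thus "A $$ (i,j) = (- B) $$ (i,j)" using ij B by simp
qed (use A B in auto)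
theorem lemma3:
  fixes n :: nat and Kt P X Y :: "real mat" and p x y :: "real vec"
  defines "K \<equiv> Kmat n Kt"
  assumes Kt: "Kt \<in> carrier_mat n n" "transpose_mat Kt = Kt" "Kt * Kt = 1\<^sub>m n"
    and P: "P \<in> orth_group K"
    and p: "p \<in> carrier_vec (n+2)" and x: "x \<in> carrier_vec (n+2)"
    and X: "X \<in> orth_alg K"
    and Y: "Y \<in> orth_alg K" and y: "y \<in> carrier_vec (n+2)"
  shows "\<exists>Z z. Z \<in> orth_alg K \<and> z \<in> carrier_vec (n+2) \<and>
           minv (Pvee K P p) * gv K Y y * Pvee K P p = gv K Z z \<and>
           pairing K (P * X * minv P + Lmat K (P *\<^sub>v p) (P *\<^sub>v x)) (P *\<^sub>v x) Y y
             = pairing K X x Z z"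
proof -
  define m where "m = n + 2"
  have Kc: "K \<in> carrier_mat m m" unfolding K_def m_def by (rule K_carrier)
  have Ks: "transpose_mat K = K" unfolding K_def by (rule K_sym[OF Kt(1,2)])
  have KK: "K * K = 1\<^sub>m m" unfolding K_def m_def by (rule K_sq[OF Kt(1,3)])
  have dK: "dim_row K = m" using Kc by simp
  have Pc: "P \<in> carrier_mat m m" and PKP: "transpose_mat P * K * P = K"
    using P unfolding orth_group_def dK by auto
  have Xc: "X \<in> carrier_mat m m" and XK: "transpose_mat X * K + K * X = 0\<^sub>m m m"
    using X unfolding orth_alg_def dK by auto
  have Yc: "Y \<in> carrier_mat m m" and YK: "transpose_mat Y * K + K * Y = 0\<^sub>m m m"
    using Y unfolding orth_alg_def dK by auto
  have as: "\<And>A B C. A \<in> carrier_mat m m \<Longrightarrow> B \<in> carrier_mat m m \<Longrightarrow> C \<in> carrier_mat m m \<Longrightarrow> A * B * C = A * (B * C)"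
    by (rule assoc_mult_mat)
  have mc: "\<And>A B. A \<in> carrier_mat m m \<Longrightarrow> B \<in> carrier_mat m m \<Longrightarrow> A * B \<in> carrier_mat m m"
    by (rule mult_carrier_mat)
  have asv: "\<And>A B w. A \<in> carrier_mat m m \<Longrightarrow> B \<in> carrier_mat m m \<Longrightarrow> w \<in> carrier_vec m \<Longrightarrow> (A * B) *\<^sub>v w = A *\<^sub>v (B *\<^sub>v w)"
    by (rule assoc_mult_mat_vec)
  have mvc: "\<And>A w. A \<in> carrier_mat m m \<Longrightarrow> w \<in> carrier_vec m \<Longrightarrow> A *\<^sub>v w \<in> carrier_vec m"
    by (rule mult_mat_vec_carrier)
  have PTc: "transpose_mat P \<in> carrier_mat m m" using Pc by simp
  have YTc: "transpose_mat Y \<in> carrier_mat m m" using Yc by simp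
  have pc: "p \<in> carrier_vec m" and xc: "x \<in> carrier_vec m" and yc: "y \<in> carrier_vec m"
    using p x y unfolding m_def by auto
  have PTK: "transpose_mat P * K \<in> carrier_mat m m" using PTc Kc by (rule mult_carrier_mat)
  have KPT: "K * transpose_mat P \<in> carrier_mat m m" using Kc PTc by (rule mult_carrier_mat)
  define Q where "Q = K * transpose_mat P * K"
  have Qc: "Q \<in> carrier_mat m m" unfolding Q_def using Kc PTc by simp
  have PKP': "transpose_mat P * (K * P) = K"
    using PKP assoc_mult_mat[OF PTc Kc Pc] by simp
  have QP: "Q * P = 1\<^sub>m m"
  proof -
    have "Q * P = K * (transpose_mat P * (K * P))" unfolding Q_def using Kc Pc by (simp add: as mc)
    also have "\<dots> = 1\<^sub>m m" unfolding PKP' by (rule KK)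
    finally show ?thesis .
  qed
  have PQ: "P * Q = 1\<^sub>m m" by (rule mat_mult_left_right_inverse[OF Qc Pc QP])
  have dP: "dim_row P = m" using Pc by simp
  have minvP: "minv P = Q" by (rule minv_eq) (use Qc PQ QP dP in auto)
  have KQ: "K * Q = transpose_mat P * K"
  proof -
    have "K * Q = (K * K) * (transpose_mat P * K)" unfolding Q_def using Kc Pc by (simp add: as mc)
    also have "\<dots> = transpose_mat P * K" unfolding KK using PTc Kc by simp
    finally show ?thesis .
  qed
  have QTK: "transpose_mat Q * K = K * P"
  proof -
    have "transpose_mat Q = K * P * K" unfolding Q_def using Kc PTc Ks
      by (simp add: transpose_mult[of _ m m _ m])
    hence "transpose_mat Q * K = K * P * (K * K)" using Kc Pc by (simp add: as mc)
    also have "\<dots> = K * P" unfolding KK using Kc Pc by simp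
    finally show ?thesis .
  qed
  have Kvc: "\<And>v. v \<in> carrier_vec m \<Longrightarrow> star K v \<in> carrier_vec m"
    unfolding star_def using Kc by simp
  define Sp where "Sp = mat_of_row (star K p)"
  define Sy where "Sy = mat_of_row (star K y)"
  have Spc: "Sp \<in> carrier_mat 1 m" unfolding Sp_def using Kvc[OF pc] by simp
  have Syc: "Sy \<in> carrier_mat 1 m" unfolding Sy_def using Kvc[OF yc] by simp
  have SpQc: "Sp * Q \<in> carrier_mat 1 m" using Spc Qc by (rule mult_carrier_mat)
  define PV where "PV = Pvee K P p"
  have PVd: "PV = four_block_mat (1\<^sub>m 1) Sp (0\<^sub>m m 1) P"
    unfolding PV_def Pvee_def Sp_def dP ..
  define B where "B = four_block_mat (1\<^sub>m 1) (-(Sp * Q)) (0\<^sub>m m 1) Q"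
  have PVc: "PV \<in> carrier_mat (1+m) (1+m)" unfolding PVd by (rule four_block_carrier_mat[OF one_carrier_mat Pc])
  have Bc: "B \<in> carrier_mat (1+m) (1+m)" unfolding B_def by (rule four_block_carrier_mat[OF one_carrier_mat Qc])
  have PVB: "PV * B = 1\<^sub>m (1+m)"
  proof -
    have "PV * B = four_block_mat (1\<^sub>m 1 * 1\<^sub>m 1 + Sp * 0\<^sub>m m 1) (1\<^sub>m 1 * -(Sp*Q) + Sp * Q)
        (0\<^sub>m m 1 * 1\<^sub>m 1 + P * 0\<^sub>m m 1) (0\<^sub>m m 1 * -(Sp*Q) + P * Q)"
      unfolding PVd B_def
      by (rule mult_four_block_mat[OF one_carrier_mat Spc zero_carrier_mat Pc one_carrier_mat _ zero_carrier_mat Qc])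
        (use SpQc in simp)
    also have "\<dots> = four_block_mat (1\<^sub>m 1) (0\<^sub>m 1 m) (0\<^sub>m m 1) (1\<^sub>m m)"
      using Spc Pc Qc PQ by (simp add: uminus_l_inv_mat[OF SpQc])
    also have "\<dots> = 1\<^sub>m (1+m)" by simp
    finally show ?thesis .
  qed
  have BPV: "B * PV = 1\<^sub>m (1+m)"
  proof -
    have "B * PV = four_block_mat (1\<^sub>m 1 * 1\<^sub>m 1 + -(Sp*Q) * 0\<^sub>m m 1) (1\<^sub>m 1 * Sp + -(Sp * Q) * P)
        (0\<^sub>m m 1 * 1\<^sub>m 1 + Q * 0\<^sub>m m 1) (0\<^sub>m m 1 * Sp + Q * P)"
      unfolding PVd B_def
      by (rule mult_four_block_mat[OF one_carrier_mat _ zero_carrier_mat Qc one_carrier_mat Spc zero_carrier_mat Pc])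
        (use SpQc in simp)
    also have "-(Sp * Q) * P = - Sp" using Spc Qc Pc QP by (simp add: assoc_mult_mat[OF Spc Qc Pc])
    also have "four_block_mat (1\<^sub>m 1 * 1\<^sub>m 1 + -(Sp*Q) * 0\<^sub>m m 1) (1\<^sub>m 1 * Sp + - Sp)
        (0\<^sub>m m 1 * 1\<^sub>m 1 + Q * 0\<^sub>m m 1) (0\<^sub>m m 1 * Sp + Q * P) = four_block_mat (1\<^sub>m 1) (0\<^sub>m 1 m) (0\<^sub>m m 1) (1\<^sub>m m)"
      using Spc Pc Qc SpQc QP by (simp add: minus_add_uminus_mat[symmetric])
    also have "\<dots> = 1\<^sub>m (1+m)" by simp
    finally show ?thesis .
  qed
  have dPV: "dim_row PV = 1 + m" using PVc by simp
  have minvPV: "minv PV = B" by (rule minv_eq) (use Bc PVB BPV dPV in auto)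
  define G where "G = gv K Y y"
  have dY: "dim_row Y = m" using Yc by simp
  have Gd: "G = four_block_mat (0\<^sub>m 1 1) Sy (0\<^sub>m m 1) Y"
    unfolding G_def gv_def Sy_def dY ..
  have Gc: "G \<in> carrier_mat (1+m) (1+m)" unfolding Gd by (rule four_block_carrier_mat[OF zero_carrier_mat Yc])
  have SyPc: "Sy * P \<in> carrier_mat 1 m" using Syc Pc by (rule mult_carrier_mat)
  have YPc: "Y * P \<in> carrier_mat m m" using Yc Pc by (rule mult_carrier_mat)
  have GPV: "G * PV = four_block_mat (0\<^sub>m 1 1) (Sy * P) (0\<^sub>m m 1) (Y * P)"
  proof -
    have "G * PV = four_block_mat (0\<^sub>m 1 1 * 1\<^sub>m 1 + Sy * 0\<^sub>m m 1) (0\<^sub>m 1 1 * Sp + Sy * P)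
        (0\<^sub>m m 1 * 1\<^sub>m 1 + Y * 0\<^sub>m m 1) (0\<^sub>m m 1 * Sp + Y * P)"
      unfolding PVd Gd
      by (rule mult_four_block_mat[OF zero_carrier_mat Syc zero_carrier_mat Yc one_carrier_mat Spc zero_carrier_mat Pc])
    also have "\<dots> = four_block_mat (0\<^sub>m 1 1) (Sy * P) (0\<^sub>m m 1) (Y * P)"
      using Syc Yc Spc SyPc YPc by simp
    finally show ?thesis .
  qed
  define Z where "Z = Q * Y * P"
  have Zc: "Z \<in> carrier_mat m m" unfolding Z_def using Qc Yc Pc by (simp add: mc)
  have SpZc: "Sp * Z \<in> carrier_mat 1 m" using Spc Zc by (rule mult_carrier_mat)
  have QYP: "Q * (Y * P) = Z" unfolding Z_def using Qc Yc Pc by (simp add: as)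
  define R where "R = Sy * P - Sp * Z"
  have eqSZ: "-(Sp * Q) * (Y * P) = - (Sp * Z)"
  proof -
    have "Sp * Q * (Y * P) = Sp * Z"
      unfolding Z_def using Spc Qc Yc Pc by (simp add: mc assoc_mult_mat[OF Spc Qc YPc] as)
    moreover have "dim_col (Sp * Q) = dim_row (Y * P)" using Qc Yc by simp
    ultimately show ?thesis using uminus_mult_left_mat[of "Sp*Q" "Y*P"] by simp
  qed
  have BGPV: "B * (G * PV) = four_block_mat (0\<^sub>m 1 1) R (0\<^sub>m m 1) Z"
  proof -
    have "B * (G * PV) = four_block_mat (1\<^sub>m 1 * 0\<^sub>m 1 1 + -(Sp*Q) * 0\<^sub>m m 1) (1\<^sub>m 1 * (Sy * P) + -(Sp * Q) * (Y * P))
        (0\<^sub>m m 1 * 0\<^sub>m 1 1 + Q * 0\<^sub>m m 1) (0\<^sub>m m 1 * (Sy * P) + Q * (Y * P))"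
      unfolding GPV B_def
      by (rule mult_four_block_mat[OF one_carrier_mat _ zero_carrier_mat Qc zero_carrier_mat SyPc zero_carrier_mat YPc])
        (use SpQc in simp)
    also have "\<dots> = four_block_mat (0\<^sub>m 1 1) R (0\<^sub>m m 1) Z"
      unfolding eqSZ R_def QYP using Spc Syc Qc SyPc YPc SpZc Yc Pc Zc
      by (simp add: minus_add_uminus_mat[OF SyPc SpZc])
    finally show ?thesis .
  qed
  have conj: "minv (Pvee K P p) * gv K Y y * Pvee K P p = four_block_mat (0\<^sub>m 1 1) R (0\<^sub>m m 1) Z"
    unfolding PV_def[symmetric] G_def[symmetric] minvPV
    using assoc_mult_mat[OF Bc Gc PVc] BGPV by simp
  define w where "w = transpose_mat P *\<^sub>v star K y - transpose_mat Z *\<^sub>v star K p"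
  have wc: "w \<in> carrier_vec m" unfolding w_def using Pc Zc Kvc[OF yc] Kvc[OF pc] by simp
  define z where "z = K *\<^sub>v w"
  have zc: "z \<in> carrier_vec m" unfolding z_def using Kc wc by simp
  have starz: "star K z = w"
    unfolding star_def Ks z_def using assoc_mult_mat_vec[OF Kc Kc wc] KK wc by simp
  have Rw: "mat_of_row w = R"
    unfolding w_def R_def Sy_def Sp_def
    using Pc Zc Kvc[OF yc] Kvc[OF pc]
    by (simp add: mat_of_row_minus[of _ m] mat_of_row_tmult[of _ m m])
  have gvZ: "gv K Z z = four_block_mat (0\<^sub>m 1 1) R (0\<^sub>m m 1) Z"
    unfolding gv_def starz Rw using Zc by simp
  have YTQT: "transpose_mat Y * transpose_mat Q \<in> carrier_mat m m" using Yc Qc by (simp add: mc)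
  have ZT: "transpose_mat Z = transpose_mat P * (transpose_mat Y * transpose_mat Q)"
    unfolding Z_def using Qc Yc Pc by (simp add: transpose_mult[of _ m m _ m] mc)
  have e1: "transpose_mat Z * K = transpose_mat P * (transpose_mat Y * K * P)"
  proof -
    have "transpose_mat Z * K = transpose_mat P * (transpose_mat Y * (transpose_mat Q * K))"
      unfolding ZT using Pc Yc Qc Kc YTQT by (simp add: as mc)
    also have "\<dots> = transpose_mat P * (transpose_mat Y * K * P)"
      unfolding QTK using Yc Kc Pc by (simp add: as mc)
    finally show ?thesis .
  qed
  have e2: "K * Z = transpose_mat P * (K * Y * P)"
  proof -
    have "K * Z = (K * Q) * (Y * P)" unfolding Z_def using Kc Qc Yc Pc by (simp add: as mc)
    also have "\<dots> = transpose_mat P * (K * Y * P)" unfolding KQ using Kc Yc Pc by (simp add: as mc)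
    finally show ?thesis .
  qed
  have TYK: "transpose_mat Y * K \<in> carrier_mat m m" and KY: "K * Y \<in> carrier_mat m m"
    using Yc Kc by (simp_all add: mc)
  have Zalg: "Z \<in> orth_alg K"
  proof -
    have "transpose_mat Z * K + K * Z = transpose_mat P * ((transpose_mat Y * K + K * Y) * P)"
      unfolding e1 e2 using Pc TYK KY
      by (simp add: add_mult_distrib_mat[OF TYK KY Pc] mult_add_distrib_mat[of _ m m _ m] mc)
    also have "\<dots> = 0\<^sub>m m m" unfolding YK using Pc by simp
    finally show ?thesis unfolding orth_alg_def dK using Zc by simp
  qed
  define u where "u = P *\<^sub>v p"
  define v where "v = P *\<^sub>v x"
  have uc: "u \<in> carrier_vec m" unfolding u_def using Pc pc by simp
  have vc: "v \<in> carrier_vec m" unfolding v_def using Pc xc by simp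
  define L where "L = Lmat K u v"
  have Lc: "L \<in> carrier_mat m m" unfolding L_def Lmat_def using uc by simp
  have PXQc: "P * X * Q \<in> carrier_mat m m" using Pc Xc Qc by (simp add: mc)
  define c where "c = u \<bullet> ((K * Y) *\<^sub>v v)"
  have KYc: "K * Y \<in> carrier_mat m m" using Kc Yc by (simp add: mc)
  have YTK: "transpose_mat Y * K = - (K * Y)" by (rule neg_from_sum[OF TYK KYc YK])
  have KYT: "transpose_mat (K * Y) = - (K * Y)"
    using transpose_mult[OF Kc Yc] Ks YTK by simp
  have tr1: "mtrace ((P * X * minv P + L) * Y) = mtrace (X * Z) + mtrace (L * Y)"
  proof -
    have "(P * X * minv P + L) * Y = P * X * Q * Y + L * Y"
      unfolding minvP by (rule add_mult_distrib_mat[OF PXQc Lc Yc])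
    hence "mtrace ((P * X * minv P + L) * Y) = mtrace (P * X * Q * Y) + mtrace (L * Y)"
      using mtrace_add[of "P * X * Q * Y" m "L * Y"] PXQc Lc Yc by (simp add: mc)
    moreover have "P * X * Q * Y = P * (X * Q * Y)" using Pc Xc Qc Yc by (simp add: as mc)
    moreover have "mtrace (P * (X * Q * Y)) = mtrace (X * Q * Y * P)"
      by (rule mtrace_comm[OF Pc]) (use Xc Qc Yc in \<open>simp add: mc\<close>)
    moreover have "X * Q * Y * P = X * Z" unfolding Z_def using Xc Qc Yc Pc by (simp add: as mc)
    ultimately show ?thesis by simp
  qed
  have tr2: "mtrace (L * Y) = - 2 * c"
  proof -
    have "mtrace (L * Y) = star K v \<bullet> (Y *\<^sub>v u) - star K u \<bullet> (Y *\<^sub>v v)"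
      unfolding L_def by (rule mtrace_L[OF Kc Yc uc vc])
    also have "star K v \<bullet> (Y *\<^sub>v u) = v \<bullet> ((K * Y) *\<^sub>v u)"
      unfolding star_def using transpose_vec_mult_scalar[OF Kc _ vc, of "Y *\<^sub>v u"] Yc uc
        assoc_mult_mat_vec[OF Kc Yc uc] by simp
    also have "\<dots> = (transpose_mat (K * Y) *\<^sub>v v) \<bullet> u"
      using transpose_vec_mult_scalar[OF KYc uc vc] by simp
    also have "\<dots> = - c"
    proof -
      have KYv: "(K * Y) *\<^sub>v v \<in> carrier_vec m" using KYc vc by simp
      have "(- (K * Y)) *\<^sub>v v = - ((K * Y) *\<^sub>v v)" by (rule uminus_mult_mat_vec) (use Yc vc in simp)
      hence "(transpose_mat (K * Y) *\<^sub>v v) \<bullet> u = (- ((K * Y) *\<^sub>v v)) \<bullet> u"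
        unfolding KYT by simp
      also have "\<dots> = - (((K * Y) *\<^sub>v v) \<bullet> u)"
        by (rule scalar_prod_uminus_left) (use Kc uc in auto)
      also have "((K * Y) *\<^sub>v v) \<bullet> u = c" unfolding c_def by (rule comm_scalar_prod[OF KYv uc])
      finally show ?thesis .
    qed
    also have "star K u \<bullet> (Y *\<^sub>v v) = c"
      unfolding star_def c_def using transpose_vec_mult_scalar[OF Kc _ uc, of "Y *\<^sub>v v"] Yc vc
        assoc_mult_mat_vec[OF Kc Yc vc] by simp
    finally show ?thesis by simp
  qed
  have zKx: "z \<bullet> (K *\<^sub>v x) = y \<bullet> (K *\<^sub>v v) - c"
  proof -
    have "z \<bullet> (K *\<^sub>v x) = (transpose_mat K *\<^sub>v w) \<bullet> (K *\<^sub>v x)" unfolding z_def Ks ..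
    also have "\<dots> = w \<bullet> (K *\<^sub>v (K *\<^sub>v x))"
      by (rule transpose_vec_mult_scalar[OF Kc _ wc]) (use Kc xc in simp)
    also have "K *\<^sub>v (K *\<^sub>v x) = x" using assoc_mult_mat_vec[OF Kc Kc xc] KK xc by simp
    also have "w \<bullet> x = (transpose_mat P *\<^sub>v star K y) \<bullet> x - (transpose_mat Z *\<^sub>v star K p) \<bullet> x"
      unfolding w_def by (rule minus_scalar_prod_distrib) (use Pc Zc Kvc[OF yc] Kvc[OF pc] xc in auto)
    also have "(transpose_mat P *\<^sub>v star K y) \<bullet> x = star K y \<bullet> v"
      unfolding v_def by (rule transpose_vec_mult_scalar[OF Pc xc Kvc[OF yc]])
    also have "star K y \<bullet> v = y \<bullet> (K *\<^sub>v v)"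
      unfolding star_def by (rule transpose_vec_mult_scalar[OF Kc vc yc])
    also have "(transpose_mat Z *\<^sub>v star K p) \<bullet> x = star K p \<bullet> (Z *\<^sub>v x)"
      by (rule transpose_vec_mult_scalar[OF Zc xc Kvc[OF pc]])
    also have "star K p \<bullet> (Z *\<^sub>v x) = p \<bullet> (K *\<^sub>v (Z *\<^sub>v x))"
      unfolding star_def by (rule transpose_vec_mult_scalar[OF Kc _ pc]) (use Zc xc in simp)
    also have "K *\<^sub>v (Z *\<^sub>v x) = transpose_mat P *\<^sub>v ((K * Y) *\<^sub>v v)"
    proof -
      have "K *\<^sub>v (Z *\<^sub>v x) = (K * Z) *\<^sub>v x" using assoc_mult_mat_vec[OF Kc Zc xc] by simp
      also have "\<dots> = transpose_mat P *\<^sub>v ((K * Y) *\<^sub>v v)" unfolding e2 v_def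
        using Pc Kc Yc xc KYc by (simp add: mc as asv mvc)
      finally show ?thesis .
    qed
    also have "p \<bullet> (transpose_mat P *\<^sub>v ((K * Y) *\<^sub>v v)) = c"
    proof -
      have KYv: "(K * Y) *\<^sub>v v \<in> carrier_vec m" using KYc vc by simp
      have "p \<bullet> (transpose_mat P *\<^sub>v ((K * Y) *\<^sub>v v)) = (transpose_mat P *\<^sub>v ((K * Y) *\<^sub>v v)) \<bullet> p"
        using Pc KYv pc by (simp add: comm_scalar_prod[of _ m])
      also have "\<dots> = ((K * Y) *\<^sub>v v) \<bullet> u" unfolding u_def by (rule transpose_vec_mult_scalar[OF Pc pc KYv])
      also have "\<dots> = c" unfolding c_def using KYv uc by (simp add: comm_scalar_prod[of _ m])
      finally show ?thesis .
    qed
    finally show ?thesis .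
  qed
  have pair: "pairing K (P * X * minv P + Lmat K (P *\<^sub>v p) (P *\<^sub>v x)) (P *\<^sub>v x) Y y = pairing K X x Z z"
    unfolding pairing_def L_def[symmetric] u_def[symmetric] v_def[symmetric] tr1 tr2 zKx by simp
  show ?thesis
  proof (intro exI conjI)
    show "Z \<in> orth_alg K" by (rule Zalg)
    show "z \<in> carrier_vec (n+2)" using zc unfolding m_def .
    show "minv (Pvee K P p) * gv K Y y * Pvee K P p = gv K Z z" unfolding conj gvZ ..
    show "pairing K (P * X * minv P + Lmat K (P *\<^sub>v p) (P *\<^sub>v x)) (P *\<^sub>v x) Y y = pairing K X x Z z"
      by (rule pair)
  qed
qed
end
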